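(* Let $f(i)=\log_2(1+i)$ for $i\in\mathbb{N}$ and let $(n_k)_{k\ge1}$ be an increasing sequence of positive integers with $\sum_{k=1}^\infty \frac{1}{f(n_k)}<\frac1{10}$. Then there exists a $1$-unconditional norm $\|\cdot\|$ on $c_{00}$ which satisfies, for every $x\in c_{00}$, the implicit equation $$\|x\|=\max\Big\{\|x\|_{c_0},\Big(\sum_{k=1}^\infty \|x\|_{n_k}^2\Big)^{1/2}\Big\},\qquad\text{where}\qquad \|x\|_k=\max_{E_1<\cdots<E_k}\frac{1}{f(k)}\sum_{i=1}^k\|E_ix\|,$$ the maximum being over all $k$-tuples of subsets $E_1<\cdots<E_k$ of $\mathbb{N}$.
   Context: $c_{00}$ is the space of finitely supported real sequences on $\mathbb{N}$, with unit vector basis $(e_i)$. For $E,F\subseteq\mathbb{N}$, $E<F$ means $\max E<\min F$. For $x\in c_{00}$ and $E\subseteq\mathbb{N}$, $Ex$ denotes the restriction: $Ex(i)=x(i)$ if $i\in E$ and $0$ otherwise. $\|x\|_{c_0}=\max_i|x(i)|$. *)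

theory Defs
  imports "HOL-Analysis.Analysis"
begin

definition c00 :: "(nat \<Rightarrow> real) set" where
  "c00 = {x. finite {i. x i \<noteq> 0}}"

definition restr :: "nat set \<Rightarrow> (nat \<Rightarrow> real) \<Rightarrow> (nat \<Rightarrow> real)" where
  "restr E x = (\<lambda>i. if i \<in> E then x i else 0)"

definition c0_norm :: "(nat \<Rightarrow> real) \<Rightarrow> real" where
  "c0_norm x = Max {\<bar>x i\<bar> | i. True}"

definition flog :: "nat \<Rightarrow> real" where
  "flog i = log 2 (1 + real i)"

definition set_less :: "nat set \<Rightarrow> nat set \<Rightarrow> bool" where
  "set_less E F \<longleftrightarrow> Max E < Min F"

definition admissible :: "nat \<Rightarrow> (nat \<Rightarrow> nat set) \<Rightarrow> bool" where
  "admissible k Es \<longleftrightarrow> (\<forall>i<k. finite (Es i) \<and> Es i \<noteq> {}) \<and>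
      (\<forall>i. Suc i < k \<longrightarrow> set_less (Es i) (Es (Suc i)))"

definition k_norm :: "((nat \<Rightarrow> real) \<Rightarrow> real) \<Rightarrow> nat \<Rightarrow> (nat \<Rightarrow> real) \<Rightarrow> real" where
  "k_norm N k x = (SUP Es \<in> {Es. admissible k Es}. (1 / flog k) * (\<Sum>i<k. N (restr (Es i) x)))"

definition is_norm_c00 :: "((nat \<Rightarrow> real) \<Rightarrow> real) \<Rightarrow> bool" where
  "is_norm_c00 N \<longleftrightarrow>
     (\<forall>x\<in>c00. N x \<ge> 0) \<and>
     (\<forall>x\<in>c00. N x = 0 \<longleftrightarrow> x = (\<lambda>i. 0)) \<and>
     (\<forall>x\<in>c00. \<forall>c. N (\<lambda>i. c * x i) = \<bar>c\<bar> * N x) \<and>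
     (\<forall>x\<in>c00. \<forall>y\<in>c00. N (\<lambda>i. x i + y i) \<le> N x + N y)"

definition one_unconditional :: "((nat \<Rightarrow> real) \<Rightarrow> real) \<Rightarrow> bool" where
  "one_unconditional N \<longleftrightarrow>
     (\<forall>x\<in>c00. \<forall>\<epsilon>::nat \<Rightarrow> real. (\<forall>i. \<epsilon> i = 1 \<or> \<epsilon> i = -1) \<longrightarrow> N (\<lambda>i. \<epsilon> i * x i) = N x)"

end

theory Submission
  imports Defs
begin


lemma c00_restr: "x \<in> c00 \<Longrightarrow> restr E x \<in> c00"
  unfolding c00_def restr_def by (auto elim: rev_finite_subset)

lemma c00_add: "x \<in> c00 \<Longrightarrow> y \<in> c00 \<Longrightarrow> (\<lambda>i. x i + y i) \<in> c00"
proof -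
  assume a: "x \<in> c00" "y \<in> c00"
  have "{i. x i + y i \<noteq> 0} \<subseteq> {i. x i \<noteq> 0} \<union> {i. y i \<noteq> 0}" by auto
  moreover have "finite ({i. x i \<noteq> 0} \<union> {i. y i \<noteq> 0})" using a unfolding c00_def by simp
  ultimately show ?thesis unfolding c00_def using finite_subset by blast
qed

lemma c00_mult: "x \<in> c00 \<Longrightarrow> (\<lambda>i. d i * x i) \<in> c00"
  unfolding c00_def by (auto elim: rev_finite_subset)

lemma c00_zero: "(\<lambda>i. 0) \<in> c00"
  unfolding c00_def by auto

definition l1 :: "(nat \<Rightarrow> real) \<Rightarrow> real" where
  "l1 x = (\<Sum>i\<in>{i. x i \<noteq> 0}. \<bar>x i\<bar>)"

lemma l1_eq: "x \<in> c00 \<Longrightarrow> finite S \<Longrightarrow> {i. x i \<noteq> 0} \<subseteq> S \<Longrightarrow> l1 x = (\<Sum>i\<in>S. \<bar>x i\<bar>)"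
  unfolding l1_def by (rule sum.mono_neutral_left) (auto simp: c00_def)

lemma l1_ge: "x \<in> c00 \<Longrightarrow> \<bar>x i\<bar> \<le> l1 x"
proof -
  assume x: "x \<in> c00"
  have f: "finite (insert i {i. x i \<noteq> 0})" using x by (auto simp: c00_def)
  have "l1 x = (\<Sum>j\<in>insert i {i. x i \<noteq> 0}. \<bar>x j\<bar>)" by (rule l1_eq[OF x f]) auto
  moreover have "\<bar>x i\<bar> \<le> (\<Sum>j\<in>insert i {i. x i \<noteq> 0}. \<bar>x j\<bar>)"
    by (rule member_le_sum) (use f in auto)
  ultimately show ?thesis by simp
qed

lemma l1_nonneg: "0 \<le> l1 x" by (simp add: l1_def sum_nonneg)

lemma l1_zero: "l1 (\<lambda>i. 0) = 0" by (simp add: l1_def)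

lemma c0_fin: "x \<in> c00 \<Longrightarrow> finite {\<bar>x i\<bar> | i. True}"
proof -
  assume x: "x \<in> c00"
  have "{\<bar>x i\<bar> | i. True} \<subseteq> insert 0 ((\<lambda>i. \<bar>x i\<bar>) ` {i. x i \<noteq> 0})" by auto
  moreover have "finite (insert 0 ((\<lambda>i. \<bar>x i\<bar>) ` {i. x i \<noteq> 0}))" using x by (simp add: c00_def)
  ultimately show ?thesis by (rule finite_subset)
qed

lemma c0_ge: assumes x: "x \<in> c00" shows "\<bar>x i\<bar> \<le> c0_norm x"
  unfolding c0_norm_def by (rule Max_ge) (use c0_fin[OF x] in auto)

lemma c0_le: assumes x: "x \<in> c00" and b: "\<And>i. \<bar>x i\<bar> \<le> C" shows "c0_norm x \<le> C"
  unfolding c0_norm_def by (subst Max_le_iff) (use c0_fin[OF x] b in auto)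

lemma c0_nonneg: "x \<in> c00 \<Longrightarrow> 0 \<le> c0_norm x"
  using c0_ge[of x 0] by simp

lemma c0_le_l1: "x \<in> c00 \<Longrightarrow> c0_norm x \<le> l1 x"
  by (rule c0_le) (auto intro: l1_ge)

lemma c0_zero_imp: "x \<in> c00 \<Longrightarrow> c0_norm x \<le> 0 \<Longrightarrow> x = (\<lambda>i. 0)"
proof
  fix i assume "x \<in> c00" "c0_norm x \<le> 0"
  then have "\<bar>x i\<bar> \<le> 0" using c0_ge[of x i] by simp
  then show "x i = 0" by simp
qed

lemma c0_add: "x \<in> c00 \<Longrightarrow> y \<in> c00 \<Longrightarrow> c0_norm (\<lambda>i. x i + y i) \<le> c0_norm x + c0_norm y"
  by (rule c0_le) (auto intro!: c00_add order_trans[OF abs_triangle_ineq] add_mono c0_ge)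

lemma c0_mult: "x \<in> c00 \<Longrightarrow> (\<And>i. \<bar>d i\<bar> = c) \<Longrightarrow> c0_norm (\<lambda>i. d i * x i) \<le> c * c0_norm x"
proof (rule c0_le)
  fix i assume x: "x \<in> c00" and d: "\<And>i. \<bar>d i\<bar> = c"
  show "(\<lambda>i. d i * x i) \<in> c00" using x by (rule c00_mult)
  have "c \<ge> 0" using d[of 0] by auto
  then show "\<bar>d i * x i\<bar> \<le> c * c0_norm x" using d[of i] c0_ge[OF x, of i]
    by (simp add: abs_mult mult_left_mono)
qed

lemma adm_less: "admissible k Es \<Longrightarrow> j < j' \<Longrightarrow> j' < k \<Longrightarrow> Max (Es j) < Min (Es j')"
proof (induction j' arbitrary: j)
  case 0 then show ?case by simp
next
  case (Suc m)
  have sl: "Max (Es m) < Min (Es (Suc m))" using Suc.prems unfolding admissible_def set_less_def by auto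
  show ?case
  proof (cases "j = m")
    case True then show ?thesis using sl by simp
  next
    case False
    then have "Max (Es j) < Min (Es m)" using Suc by auto
    moreover have "finite (Es m)" "Es m \<noteq> {}" using Suc.prems unfolding admissible_def by auto
    then have "Min (Es m) \<le> Max (Es m)" by (simp add: Min_in)
    ultimately show ?thesis using sl by linarith
  qed
qed

lemma adm_disj: "admissible k Es \<Longrightarrow> j < k \<Longrightarrow> j' < k \<Longrightarrow> i \<in> Es j \<Longrightarrow> i \<in> Es j' \<Longrightarrow> j = j'"
proof (rule ccontr)
  assume a: "admissible k Es" "j < k" "j' < k" "i \<in> Es j" "i \<in> Es j'" "j \<noteq> j'"
  have fin: "finite (Es j)" "finite (Es j')" using a unfolding admissible_def by auto
  have "i \<le> Max (Es j)" "Min (Es j) \<le> i" "i \<le> Max (Es j')" "Min (Es j') \<le> i"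
    using a fin by auto
  moreover have "Max (Es j) < Min (Es j') \<or> Max (Es j') < Min (Es j)"
    using a adm_less[OF a(1)] by (cases "j < j'") auto
  ultimately show False by linarith
qed

lemma l1_restr_sum: "admissible k Es \<Longrightarrow> x \<in> c00 \<Longrightarrow> (\<Sum>j<k. l1 (restr (Es j) x)) \<le> l1 x"
proof -
  assume adm: "admissible k Es" and x: "x \<in> c00"
  define S where "S = {i. x i \<noteq> 0}"
  have fS: "finite S" using x by (simp add: S_def c00_def)
  have "(\<Sum>j<k. l1 (restr (Es j) x)) = (\<Sum>j<k. \<Sum>i\<in>S. \<bar>restr (Es j) x i\<bar>)"
    by (intro sum.cong refl l1_eq c00_restr x fS) (auto simp: S_def restr_def)
  also have "\<dots> = (\<Sum>i\<in>S. \<Sum>j<k. \<bar>restr (Es j) x i\<bar>)" by (rule sum.swap)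
  also have "\<dots> \<le> (\<Sum>i\<in>S. \<bar>x i\<bar>)"
  proof (rule sum_mono)
    fix i assume "i \<in> S"
    have "(\<Sum>j<k. \<bar>restr (Es j) x i\<bar>) = (\<Sum>j\<in>{j\<in>{..<k}. i \<in> Es j}. \<bar>x i\<bar>)"
      by (simp add: restr_def sum.inter_filter[symmetric] if_distrib cong: if_cong)
    also have "\<dots> = \<bar>x i\<bar> * real (card {j\<in>{..<k}. i \<in> Es j})" by simp
    also have "\<dots> \<le> \<bar>x i\<bar> * 1"
    proof (rule mult_left_mono)
      have "card {j\<in>{..<k}. i \<in> Es j} \<le> Suc 0"
        by (subst card_le_Suc0_iff_eq) (auto intro: adm_disj[OF adm])
      then show "real (card {j\<in>{..<k}. i \<in> Es j}) \<le> 1" by simp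
    qed simp
    finally show "(\<Sum>j<k. \<bar>restr (Es j) x i\<bar>) \<le> \<bar>x i\<bar>" by simp
  qed
  also have "\<dots> = l1 x" by (rule l1_eq[symmetric, OF x fS]) (simp add: S_def)
  finally show ?thesis .
qed



definition good :: "((nat \<Rightarrow> real) \<Rightarrow> real) \<Rightarrow> bool" where
  "good N \<longleftrightarrow> (\<forall>y\<in>c00. 0 \<le> N y \<and> N y \<le> l1 y)"

definition tri :: "((nat \<Rightarrow> real) \<Rightarrow> real) \<Rightarrow> bool" where
  "tri N \<longleftrightarrow> (\<forall>x\<in>c00. \<forall>y\<in>c00. N (\<lambda>i. x i + y i) \<le> N x + N y)"

definition hom :: "((nat \<Rightarrow> real) \<Rightarrow> real) \<Rightarrow> bool" where
  "hom N \<longleftrightarrow> (\<forall>x\<in>c00. \<forall>d c. (\<forall>i. \<bar>d i\<bar> = c) \<longrightarrow> N (\<lambda>i. d i * x i) \<le> c * N x)"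

lemma flog_ge1: "k > 0 \<Longrightarrow> 1 \<le> flog k"
  unfolding flog_def by (subst le_log_iff) auto

lemma flog_nonneg: "0 \<le> flog k"
  unfolding flog_def by simp

lemma adm_single: "admissible k (\<lambda>i. {i})"
  unfolding admissible_def set_less_def by auto

lemma adm_ne: "{Es. admissible k Es} \<noteq> {}"
  using adm_single by blast

lemma restr_add: "restr E (\<lambda>i. x i + y i) = (\<lambda>i. restr E x i + restr E y i)"
  by (auto simp: restr_def fun_eq_iff)

lemma restr_mult: "restr E (\<lambda>i. d i * x i) = (\<lambda>i. d i * restr E x i)"
  by (auto simp: restr_def fun_eq_iff)

lemma elem_bound:
  assumes "good N" "x \<in> c00" "admissible k Es"
  shows "(1 / flog k) * (\<Sum>i<k. N (restr (Es i) x)) \<le> l1 x / flog k"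
proof -
  have "(\<Sum>i<k. N (restr (Es i) x)) \<le> (\<Sum>i<k. l1 (restr (Es i) x))"
    using assms(1,2) by (intro sum_mono) (auto simp: good_def c00_restr)
  also have "\<dots> \<le> l1 x" by (rule l1_restr_sum[OF assms(3,2)])
  finally show ?thesis using flog_nonneg[of k] by (simp add: divide_right_mono)
qed

lemma elem_nonneg:
  assumes "good N" "x \<in> c00"
  shows "0 \<le> (1 / flog k) * (\<Sum>i<k. N (restr (Es i) x))"
  using assms flog_nonneg[of k] by (intro mult_nonneg_nonneg sum_nonneg) (auto simp: good_def c00_restr)

lemma knorm_upper:
  assumes "good N" "x \<in> c00" "admissible k Es"
  shows "(1 / flog k) * (\<Sum>i<k. N (restr (Es i) x)) \<le> k_norm N k x"
  unfolding k_norm_def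
proof (rule cSUP_upper)
  show "Es \<in> {Es. admissible k Es}" using assms by simp
  show "bdd_above ((\<lambda>Es. 1 / flog k * (\<Sum>i<k. N (restr (Es i) x))) ` {Es. admissible k Es})"
    using elem_bound[OF assms(1,2)] by (intro bdd_aboveI2) auto
qed

lemma knorm_least:
  assumes "\<And>Es. admissible k Es \<Longrightarrow> (1 / flog k) * (\<Sum>i<k. N (restr (Es i) x)) \<le> C"
  shows "k_norm N k x \<le> C"
  unfolding k_norm_def using assms adm_ne by (intro cSUP_least) auto

lemma knorm_nonneg: "good N \<Longrightarrow> x \<in> c00 \<Longrightarrow> 0 \<le> k_norm N k x"
  using knorm_upper[OF _ _ adm_single] elem_nonneg by (meson order_trans)

lemma knorm_bound: "good N \<Longrightarrow> x \<in> c00 \<Longrightarrow> k_norm N k x \<le> l1 x / flog k"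
  by (intro knorm_least elem_bound)

lemma knorm_mono:
  assumes "good M" "\<forall>y\<in>c00. N y \<le> M y" "x \<in> c00"
  shows "k_norm N k x \<le> k_norm M k x"
proof (rule knorm_least)
  fix Es assume a: "admissible k Es"
  have "(\<Sum>i<k. N (restr (Es i) x)) \<le> (\<Sum>i<k. M (restr (Es i) x))"
    using assms by (intro sum_mono) (auto simp: c00_restr)
  then have "(1 / flog k) * (\<Sum>i<k. N (restr (Es i) x)) \<le> (1 / flog k) * (\<Sum>i<k. M (restr (Es i) x))"
    using flog_nonneg[of k] by (intro mult_left_mono) auto
  also have "\<dots> \<le> k_norm M k x" by (rule knorm_upper[OF assms(1,3) a])
  finally show "(1 / flog k) * (\<Sum>i<k. N (restr (Es i) x)) \<le> k_norm M k x" .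
qed

lemma knorm_tri:
  assumes "good N" "tri N" "x \<in> c00" "y \<in> c00"
  shows "k_norm N k (\<lambda>i. x i + y i) \<le> k_norm N k x + k_norm N k y"
proof (rule knorm_least)
  fix Es assume a: "admissible k Es"
  have "(\<Sum>i<k. N (restr (Es i) (\<lambda>i. x i + y i))) \<le> (\<Sum>i<k. N (restr (Es i) x)) + (\<Sum>i<k. N (restr (Es i) y))"
    unfolding sum.distrib[symmetric] restr_add
    using assms(2-4) by (intro sum_mono) (auto simp: tri_def c00_restr)
  then have "(1 / flog k) * (\<Sum>i<k. N (restr (Es i) (\<lambda>i. x i + y i))) \<le>
      (1 / flog k) * (\<Sum>i<k. N (restr (Es i) x)) + (1 / flog k) * (\<Sum>i<k. N (restr (Es i) y))"
    using flog_nonneg[of k] unfolding distrib_left[symmetric] by (intro mult_left_mono) auto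
  also have "\<dots> \<le> k_norm N k x + k_norm N k y"
    by (intro add_mono knorm_upper a assms)
  finally show "(1 / flog k) * (\<Sum>i<k. N (restr (Es i) (\<lambda>i. x i + y i))) \<le> k_norm N k x + k_norm N k y" .
qed

lemma knorm_hom:
  assumes "good N" "hom N" "x \<in> c00" "\<And>i. \<bar>d i\<bar> = c"
  shows "k_norm N k (\<lambda>i. d i * x i) \<le> c * k_norm N k x"
proof (rule knorm_least)
  fix Es assume a: "admissible k Es"
  have c: "0 \<le> c" using assms(4)[of 0] by auto
  have "(\<Sum>i<k. N (restr (Es i) (\<lambda>i. d i * x i))) \<le> c * (\<Sum>i<k. N (restr (Es i) x))"
    unfolding sum_distrib_left restr_mult
    using assms(2-4) by (intro sum_mono) (auto simp: hom_def c00_restr)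
  then have "(1 / flog k) * (\<Sum>i<k. N (restr (Es i) (\<lambda>i. d i * x i))) \<le>
      c * ((1 / flog k) * (\<Sum>i<k. N (restr (Es i) x)))"
    using flog_nonneg[of k] by (simp add: mult_left_mono divide_right_mono)
  also have "\<dots> \<le> c * k_norm N k x"
    by (intro mult_left_mono knorm_upper a assms c)
  finally show "(1 / flog k) * (\<Sum>i<k. N (restr (Es i) (\<lambda>i. d i * x i))) \<le> c * k_norm N k x" .
qed

lemma minkowski:
  fixes a b c :: "nat \<Rightarrow> real"
  assumes sa: "summable (\<lambda>k. (a k)\<^sup>2)" and sb: "summable (\<lambda>k. (b k)\<^sup>2)"
    and sc: "summable (\<lambda>k. (c k)\<^sup>2)"
    and c0: "\<And>k. 0 \<le> c k" and cab: "\<And>k. c k \<le> a k + b k"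
  shows "sqrt (\<Sum>k. (c k)\<^sup>2) \<le> sqrt (\<Sum>k. (a k)\<^sup>2) + sqrt (\<Sum>k. (b k)\<^sup>2)"
proof -
  let ?A = "sqrt (\<Sum>k. (a k)\<^sup>2)" and ?B = "sqrt (\<Sum>k. (b k)\<^sup>2)"
  have AB: "0 \<le> ?A + ?B" by (simp add: sa sb suminf_nonneg)
  have "(\<Sum>k. (c k)\<^sup>2) \<le> (?A + ?B)\<^sup>2"
  proof (rule suminf_le_const[OF sc])
    fix K
    have "(\<Sum>k<K. (c k)\<^sup>2) \<le> (\<Sum>k<K. (a k + b k)\<^sup>2)"
      using c0 cab by (intro sum_mono power_mono) auto
    also have "\<dots> = (L2_set (\<lambda>k. a k + b k) {..<K})\<^sup>2"
      unfolding L2_set_def by (simp add: sum_nonneg)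
    also have "\<dots> \<le> (L2_set a {..<K} + L2_set b {..<K})\<^sup>2"
      by (intro power_mono L2_set_triangle_ineq L2_set_nonneg)
    also have "\<dots> \<le> (?A + ?B)\<^sup>2"
    proof (intro power_mono add_mono add_nonneg_nonneg L2_set_nonneg)
      show "L2_set a {..<K} \<le> ?A" unfolding L2_set_def
        by (intro real_sqrt_le_mono sum_le_suminf sa) auto
      show "L2_set b {..<K} \<le> ?B" unfolding L2_set_def
        by (intro real_sqrt_le_mono sum_le_suminf sb) auto
    qed
    finally show "(\<Sum>k<K. (c k)\<^sup>2) \<le> (?A + ?B)\<^sup>2" .
  qed
  then have "sqrt (\<Sum>k. (c k)\<^sup>2) \<le> sqrt ((?A + ?B)\<^sup>2)" by (rule real_sqrt_le_mono)
  also have "\<dots> = ?A + ?B" using AB by simp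
  finally show ?thesis .
qed



definition Phi :: "(nat \<Rightarrow> nat) \<Rightarrow> ((nat \<Rightarrow> real) \<Rightarrow> real) \<Rightarrow> (nat \<Rightarrow> real) \<Rightarrow> real" where
  "Phi n N x = max (c0_norm x) (sqrt (\<Sum>k. (k_norm N (n k) x)\<^sup>2))"

locale seqs =
  fixes n :: "nat \<Rightarrow> nat"
  assumes pos: "\<And>k. n k > 0"
    and summ: "summable (\<lambda>k. 1 / flog (n k))"
    and le1: "(\<Sum>k. 1 / flog (n k)) \<le> 1"
begin

lemma sq_summable:
  assumes "good N" "x \<in> c00"
  shows "summable (\<lambda>k. (k_norm N (n k) x)\<^sup>2) \<and> (\<Sum>k. (k_norm N (n k) x)\<^sup>2) \<le> (l1 x)\<^sup>2"
proof -
  have b: "(k_norm N (n k) x)\<^sup>2 \<le> (l1 x)\<^sup>2 * (1 / flog (n k))" for k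
  proof -
    have f1: "1 \<le> flog (n k)" using flog_ge1 pos by blast
    have "(k_norm N (n k) x)\<^sup>2 \<le> (l1 x / flog (n k))\<^sup>2"
      by (intro power_mono knorm_bound knorm_nonneg assms)
    also have "\<dots> = (l1 x)\<^sup>2 * ((1 / flog (n k)) * (1 / flog (n k)))"
      by (simp add: power2_eq_square)
    also have "\<dots> \<le> (l1 x)\<^sup>2 * ((1 / flog (n k)) * 1)"
      using f1 by (intro mult_left_mono) auto
    finally show ?thesis by simp
  qed
  have s2: "summable (\<lambda>k. (l1 x)\<^sup>2 * (1 / flog (n k)))" by (intro summable_mult summ)
  have s1: "summable (\<lambda>k. (k_norm N (n k) x)\<^sup>2)"
  proof (rule summable_comparison_test'[OF s2, of 0])
    fix k :: nat
    show "norm ((k_norm N (n k) x)\<^sup>2) \<le> (l1 x)\<^sup>2 * (1 / flog (n k))" using b[of k] by simp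
  qed
  have "(\<Sum>k. (k_norm N (n k) x)\<^sup>2) \<le> (\<Sum>k. (l1 x)\<^sup>2 * (1 / flog (n k)))"
    by (intro suminf_le s1 s2 b)
  also have "\<dots> = (l1 x)\<^sup>2 * (\<Sum>k. 1 / flog (n k))" by (rule suminf_mult[OF summ])
  also have "\<dots> \<le> (l1 x)\<^sup>2 * 1" by (intro mult_left_mono le1) simp
  finally show ?thesis using s1 by simp
qed

lemma sqrt_bound: "good N \<Longrightarrow> x \<in> c00 \<Longrightarrow> sqrt (\<Sum>k. (k_norm N (n k) x)\<^sup>2) \<le> l1 x"
  using sq_summable[of N x] l1_nonneg[of x] by (metis real_sqrt_abs real_sqrt_le_mono abs_of_nonneg)

lemma Phi_good: assumes "good N" shows "good (Phi n N)"
  unfolding good_def[of "Phi n N"] Phi_def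
proof
  fix y assume y: "y \<in> c00"
  have "c0_norm y \<le> l1 y" "0 \<le> c0_norm y" "sqrt (\<Sum>k. (k_norm N (n k) y)\<^sup>2) \<le> l1 y"
    using sqrt_bound[OF assms y] c0_le_l1[OF y] c0_nonneg[OF y] by auto
  then show "0 \<le> max (c0_norm y) (sqrt (\<Sum>k. (k_norm N (n k) y)\<^sup>2)) \<and>
          max (c0_norm y) (sqrt (\<Sum>k. (k_norm N (n k) y)\<^sup>2)) \<le> l1 y" by simp
qed

lemma Phi_ge_c0: "c0_norm x \<le> Phi n N x"
  unfolding Phi_def by simp

lemma Phi_mono:
  assumes "good N" "good M" "\<forall>y\<in>c00. N y \<le> M y" "x \<in> c00"
  shows "Phi n N x \<le> Phi n M x"
proof -
  have "(\<Sum>k. (k_norm N (n k) x)\<^sup>2) \<le> (\<Sum>k. (k_norm M (n k) x)\<^sup>2)"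
    using assms sq_summable[of N x] sq_summable[of M x]
    by (intro suminf_le power_mono knorm_mono knorm_nonneg) auto
  then show ?thesis unfolding Phi_def by (intro max.mono real_sqrt_le_mono) auto
qed

lemma Phi_tri:
  assumes "good N" "tri N"
  shows "tri (Phi n N)"
  unfolding tri_def
proof (intro ballI)
  fix x y assume x: "x \<in> c00" and y: "y \<in> c00"
  have xy: "(\<lambda>i. x i + y i) \<in> c00" using x y by (rule c00_add)
  have S: "sqrt (\<Sum>k. (k_norm N (n k) (\<lambda>i. x i + y i))\<^sup>2) \<le>
      sqrt (\<Sum>k. (k_norm N (n k) x)\<^sup>2) + sqrt (\<Sum>k. (k_norm N (n k) y)\<^sup>2)"
    using sq_summable[OF assms(1) x] sq_summable[OF assms(1) y] sq_summable[OF assms(1) xy]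
    by (intro minkowski knorm_nonneg knorm_tri assms x y xy) auto
  have C: "c0_norm (\<lambda>i. x i + y i) \<le> c0_norm x + c0_norm y" by (rule c0_add[OF x y])
  show "Phi n N (\<lambda>i. x i + y i) \<le> Phi n N x + Phi n N y"
    unfolding Phi_def using S C by (simp add: max_def) linarith?
qed

lemma Phi_hom:
  assumes "good N" "hom N"
  shows "hom (Phi n N)"
  unfolding hom_def
proof (intro ballI allI impI)
  fix x and d :: "nat \<Rightarrow> real" and c :: real assume x: "x \<in> c00" and d: "\<forall>i. \<bar>d i\<bar> = c"
  have c: "0 \<le> c" using d by (metis abs_ge_zero)
  have dx: "(\<lambda>i. d i * x i) \<in> c00" using x by (rule c00_mult)
  have "(\<Sum>k. (k_norm N (n k) (\<lambda>i. d i * x i))\<^sup>2) \<le> (\<Sum>k. c\<^sup>2 * (k_norm N (n k) x)\<^sup>2)"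
    using sq_summable[OF assms(1) x] sq_summable[OF assms(1) dx] d
    by (intro suminf_le summable_mult)
       (auto simp: power_mult_distrib[symmetric] intro!: power_mono knorm_nonneg knorm_hom assms x d dx)
  also have "\<dots> = c\<^sup>2 * (\<Sum>k. (k_norm N (n k) x)\<^sup>2)"
    using sq_summable[OF assms(1) x] by (intro suminf_mult) auto
  finally have "sqrt (\<Sum>k. (k_norm N (n k) (\<lambda>i. d i * x i))\<^sup>2) \<le> sqrt (c\<^sup>2 * (\<Sum>k. (k_norm N (n k) x)\<^sup>2))"
    by (rule real_sqrt_le_mono)
  also have "\<dots> = c * sqrt (\<Sum>k. (k_norm N (n k) x)\<^sup>2)" using c by (simp add: real_sqrt_mult)
  finally have S: "sqrt (\<Sum>k. (k_norm N (n k) (\<lambda>i. d i * x i))\<^sup>2) \<le> c * sqrt (\<Sum>k. (k_norm N (n k) x)\<^sup>2)" .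
  have C: "c0_norm (\<lambda>i. d i * x i) \<le> c * c0_norm x" using d by (intro c0_mult x) auto
  show "Phi n N (\<lambda>i. d i * x i) \<le> c * Phi n N x"
  proof -
    let ?A = "c0_norm x" and ?B = "sqrt (\<Sum>k. (k_norm N (n k) x)\<^sup>2)"
    have m1: "c * ?A \<le> c * max ?A ?B" using c by (intro mult_left_mono) auto
    have m2: "c * ?B \<le> c * max ?A ?B" using c by (intro mult_left_mono) auto
    show ?thesis unfolding Phi_def using S C m1 m2 by simp
  qed
qed

end


context seqs begin

definition Ns :: "nat \<Rightarrow> (nat \<Rightarrow> real) \<Rightarrow> real" where
  "Ns m = (Phi n ^^ m) (\<lambda>_. 0)"

lemma Ns_0: "Ns 0 = (\<lambda>_. 0)" by (simp add: Ns_def)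
lemma Ns_Suc: "Ns (Suc m) = Phi n (Ns m)" by (simp add: Ns_def)

lemma Ns_props: "good (Ns m) \<and> tri (Ns m) \<and> hom (Ns m)"
proof (induction m)
  case 0 then show ?case by (simp add: Ns_0 good_def tri_def hom_def l1_nonneg)
next
  case (Suc m) then show ?case by (simp add: Ns_Suc Phi_good Phi_tri Phi_hom)
qed

lemma Ns_good: "good (Ns m)" using Ns_props by blast

lemma Ns_inc: "\<forall>x\<in>c00. Ns m x \<le> Ns (Suc m) x"
proof (induction m)
  case 0 then show ?case using Ns_good[of 1] by (simp add: Ns_0 good_def)
next
  case (Suc m)
  show ?case
  proof
    fix x assume "x \<in> c00"
    then show "Ns (Suc m) x \<le> Ns (Suc (Suc m)) x"
      using Phi_mono[OF Ns_good[of m] Ns_good[of "Suc m"] Suc.IH] by (simp add: Ns_Suc)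
  qed
qed

lemma Ns_incseq: "x \<in> c00 \<Longrightarrow> incseq (\<lambda>m. Ns m x)"
  using Ns_inc by (intro incseq_SucI) auto

lemma Ns_bdd: "x \<in> c00 \<Longrightarrow> bdd_above (range (\<lambda>m. Ns m x))"
  using Ns_good by (intro bdd_aboveI2[where M = "l1 x"]) (auto simp: good_def)

definition NL :: "(nat \<Rightarrow> real) \<Rightarrow> real" where
  "NL x = (SUP m. Ns m x)"

lemma Ns_tendsto: "x \<in> c00 \<Longrightarrow> (\<lambda>m. Ns m x) \<longlonglongrightarrow> NL x"
  unfolding NL_def by (intro LIMSEQ_incseq_SUP Ns_bdd Ns_incseq)

lemma Ns_le_NL: "x \<in> c00 \<Longrightarrow> Ns m x \<le> NL x"
  unfolding NL_def by (intro cSUP_upper Ns_bdd) auto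

lemma NL_le: "(\<And>m. Ns m x \<le> C) \<Longrightarrow> NL x \<le> C"
  unfolding NL_def by (intro cSUP_least) auto

lemma NL_good: "good NL"
  unfolding good_def
proof
  fix y assume y: "y \<in> c00"
  have "0 \<le> Ns 0 y" by (simp add: Ns_0)
  also have "\<dots> \<le> NL y" by (rule Ns_le_NL[OF y])
  finally show "0 \<le> NL y \<and> NL y \<le> l1 y"
    using Ns_good y by (auto intro!: NL_le simp: good_def)
qed

lemma NL_tri: "tri NL"
  unfolding tri_def
proof (intro ballI)
  fix x y assume x: "x \<in> c00" and y: "y \<in> c00"
  have xy: "(\<lambda>i. x i + y i) \<in> c00" using x y by (rule c00_add)
  show "NL (\<lambda>i. x i + y i) \<le> NL x + NL y"
  proof (rule LIMSEQ_le[OF Ns_tendsto[OF xy] tendsto_add[OF Ns_tendsto[OF x] Ns_tendsto[OF y]]])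
    show "\<exists>N. \<forall>m\<ge>N. Ns m (\<lambda>i. x i + y i) \<le> Ns m x + Ns m y"
      using Ns_props x y by (auto simp: tri_def)
  qed
qed

lemma NL_hom: "hom NL"
  unfolding hom_def
proof (intro ballI allI impI)
  fix x and d :: "nat \<Rightarrow> real" and c :: real assume x: "x \<in> c00" and d: "\<forall>i. \<bar>d i\<bar> = c"
  have dx: "(\<lambda>i. d i * x i) \<in> c00" using x by (rule c00_mult)
  show "NL (\<lambda>i. d i * x i) \<le> c * NL x"
  proof (rule LIMSEQ_le[OF Ns_tendsto[OF dx] tendsto_mult_left[OF Ns_tendsto[OF x]]])
    show "\<exists>N. \<forall>m\<ge>N. Ns m (\<lambda>i. d i * x i) \<le> c * Ns m x"
      using Ns_props x d by (auto simp: hom_def)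
  qed
qed

lemma NL_fix1: "x \<in> c00 \<Longrightarrow> NL x \<le> Phi n NL x"
proof (rule NL_le)
  fix m assume x: "x \<in> c00"
  show "Ns m x \<le> Phi n NL x"
  proof (cases m)
    case 0 then show ?thesis using Phi_good[OF NL_good] x by (simp add: Ns_0 good_def)
  next
    case (Suc k)
    then show ?thesis unfolding Suc Ns_Suc
      by (intro Phi_mono Ns_good NL_good x) (auto intro: Ns_le_NL)
  qed
qed

lemma NL_fix2:
  assumes x: "x \<in> c00"
  shows "Phi n NL x \<le> NL x"
proof -
  define b where "b m k = k_norm (Ns m) (n k) x" for m k
  define L where "L k = (SUP m. b m k)" for k
  have b_inc: "incseq (\<lambda>m. b m k)" for k
    unfolding b_def using Ns_inc Ns_good x by (intro incseq_SucI knorm_mono) auto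
  have b_bdd: "bdd_above (range (\<lambda>m. b m k))" for k
    unfolding b_def using Ns_good x by (intro bdd_aboveI2[where M = "l1 x / flog (n k)"] knorm_bound) auto
  have b_lim: "(\<lambda>m. b m k) \<longlonglongrightarrow> L k" for k
    unfolding L_def by (intro LIMSEQ_incseq_SUP b_inc b_bdd)
  have b_le: "b m k \<le> L k" for m k
    unfolding L_def by (intro cSUP_upper b_bdd) auto
  have aL: "k_norm NL (n k) x \<le> L k" for k
  proof (rule knorm_least)
    fix Es assume adm: "admissible (n k) Es"
    have "(\<lambda>m. (1 / flog (n k)) * (\<Sum>i<n k. Ns m (restr (Es i) x))) \<longlonglongrightarrow>
        (1 / flog (n k)) * (\<Sum>i<n k. NL (restr (Es i) x))"
      by (intro tendsto_mult_left tendsto_sum Ns_tendsto c00_restr x)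
    moreover have "\<forall>m. (1 / flog (n k)) * (\<Sum>i<n k. Ns m (restr (Es i) x)) \<le> L k"
      using knorm_upper[OF Ns_good x adm] b_le unfolding b_def by (meson order_trans)
    ultimately show "(1 / flog (n k)) * (\<Sum>i<n k. NL (restr (Es i) x)) \<le> L k"
      by (intro LIMSEQ_le_const2) auto
  qed
  have NLx: "0 \<le> NL x" using NL_good x by (simp add: good_def)
  have "(\<Sum>k. (k_norm NL (n k) x)\<^sup>2) \<le> (NL x)\<^sup>2"
  proof (rule suminf_le_const)
    show "summable (\<lambda>k. (k_norm NL (n k) x)\<^sup>2)" using sq_summable[OF NL_good x] by simp
    fix K
    have "(\<Sum>k<K. (k_norm NL (n k) x)\<^sup>2) \<le> (\<Sum>k<K. (L k)\<^sup>2)"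
      by (intro sum_mono power_mono aL knorm_nonneg NL_good x)
    also have "\<dots> \<le> (NL x)\<^sup>2"
    proof (rule LIMSEQ_le_const2)
      show "(\<lambda>m. \<Sum>k<K. (b m k)\<^sup>2) \<longlonglongrightarrow> (\<Sum>k<K. (L k)\<^sup>2)"
        by (intro tendsto_sum tendsto_power b_lim)
      show "\<exists>N. \<forall>m\<ge>N. (\<Sum>k<K. (b m k)\<^sup>2) \<le> (NL x)\<^sup>2"
      proof (intro exI allI impI)
        fix m :: nat
        have sm: "summable (\<lambda>k. (b m k)\<^sup>2)" using sq_summable[OF Ns_good x] unfolding b_def by simp
        have "(\<Sum>k<K. (b m k)\<^sup>2) \<le> (\<Sum>k. (b m k)\<^sup>2)"
          by (intro sum_le_suminf sm) auto
        also have "\<dots> = (sqrt (\<Sum>k. (b m k)\<^sup>2))\<^sup>2"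
          using sm by (simp add: suminf_nonneg)
        also have "\<dots> \<le> (Ns (Suc m) x)\<^sup>2"
          unfolding Ns_Suc Phi_def b_def using sm unfolding b_def by (intro power_mono) (auto simp: suminf_nonneg)
        also have "\<dots> \<le> (NL x)\<^sup>2"
          using Ns_good[of "Suc m"] x by (intro power_mono Ns_le_NL) (auto simp: good_def)
        finally show "(\<Sum>k<K. (b m k)\<^sup>2) \<le> (NL x)\<^sup>2" .
      qed
    qed
    finally show "(\<Sum>k<K. (k_norm NL (n k) x)\<^sup>2) \<le> (NL x)\<^sup>2" .
  qed
  then have S: "sqrt (\<Sum>k. (k_norm NL (n k) x)\<^sup>2) \<le> NL x"
    using NLx by (metis real_sqrt_le_mono real_sqrt_abs abs_of_nonneg)
  have "c0_norm x \<le> Ns 1 x" using Phi_ge_c0 by (simp add: Ns_Suc)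
  also have "\<dots> \<le> NL x" by (rule Ns_le_NL[OF x])
  finally show ?thesis unfolding Phi_def using S by simp
qed

lemma NL_fix: "x \<in> c00 \<Longrightarrow> NL x = Phi n NL x"
  using NL_fix1 NL_fix2 by (meson order_antisym)

end


theorem proposition1p1:
  fixes n :: "nat \<Rightarrow> nat"
  assumes "strict_mono n"
    and "\<forall>k. n k > 0"
    and "summable (\<lambda>k. 1 / flog (n k))"
    and "(\<Sum>k. 1 / flog (n k)) < 1 / 10"
  shows "\<exists>N. is_norm_c00 N \<and> one_unconditional N \<and>
           (\<forall>x\<in>c00. summable (\<lambda>k. (k_norm N (n k) x)\<^sup>2) \<and>
              N x = max (c0_norm x) (sqrt (\<Sum>k. (k_norm N (n k) x)\<^sup>2)))"
proof -
  interpret seqs n using assms by unfold_locales auto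
  let ?N = NL
  have g: "good NL" by (rule NL_good)
  have hm: "hom NL" by (rule NL_hom)
  have h: "\<And>x d c. x \<in> c00 \<Longrightarrow> (\<forall>i. \<bar>d i\<bar> = c) \<Longrightarrow> NL (\<lambda>i. d i * x i) \<le> c * NL x"
    using hm unfolding hom_def by blast
  have zero: "NL (\<lambda>i. 0) = 0"
    using g c00_zero l1_zero unfolding good_def by (metis order_antisym)
  have homeq: "NL (\<lambda>i. c * x i) = \<bar>c\<bar> * NL x" if x: "x \<in> c00" for x c
  proof (cases "c = 0")
    case True then show ?thesis using zero by simp
  next
    case False
    have le: "NL (\<lambda>i. c * x i) \<le> \<bar>c\<bar> * NL x"
      if "x \<in> c00" for c x using h[OF that, of "\<lambda>i. c" "\<bar>c\<bar>"] by simp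
    have cx: "(\<lambda>i. c * x i) \<in> c00" using x by (rule c00_mult)
    have "NL x = NL (\<lambda>i. (1 / c) * (c * x i))" using False by simp
    also have "\<dots> \<le> \<bar>1 / c\<bar> * NL (\<lambda>i. c * x i)" by (rule le[OF cx])
    finally have "\<bar>c\<bar> * NL x \<le> \<bar>c\<bar> * (\<bar>1 / c\<bar> * NL (\<lambda>i. c * x i))"
      by (intro mult_left_mono) auto
    also have "\<dots> = NL (\<lambda>i. c * x i)" using False by (simp add: abs_divide)
    finally show ?thesis using le[OF x, of c] by simp
  qed
  have norm: "is_norm_c00 NL"
    unfolding is_norm_c00_def
  proof (intro conjI ballI allI)
    fix x assume x: "x \<in> c00"
    show "0 \<le> NL x" using g x by (simp add: good_def)
    show "(NL x = 0) = (x = (\<lambda>i. 0))"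
    proof
      assume "NL x = 0"
      then have "c0_norm x \<le> 0" using NL_fix[OF x] unfolding Phi_def by simp
      then show "x = (\<lambda>i. 0)" by (rule c0_zero_imp[OF x])
    qed (simp add: zero)
    fix c show "NL (\<lambda>i. c * x i) = \<bar>c\<bar> * NL x" by (rule homeq[OF x])
  next
    fix x y assume "x \<in> c00" "y \<in> c00"
    then show "NL (\<lambda>i. x i + y i) \<le> NL x + NL y" using NL_tri by (simp add: tri_def)
  qed
  have unc: "one_unconditional NL"
    unfolding one_unconditional_def
  proof (intro ballI allI impI)
    fix x and e :: "nat \<Rightarrow> real" assume x: "x \<in> c00" and e: "\<forall>i. e i = 1 \<or> e i = -1"
    have ae: "\<forall>i. \<bar>e i\<bar> = 1" using e by (metis abs_1 abs_minus_cancel)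
    have ex: "(\<lambda>i. e i * x i) \<in> c00" using x by (rule c00_mult)
    have le1: "NL (\<lambda>i. e i * x i) \<le> NL x" using h[OF x, of e 1] ae by simp
    have "x = (\<lambda>i. e i * (e i * x i))"
    proof
      fix i show "x i = e i * (e i * x i)" using e[rule_format, of i] by auto
    qed
    then have "NL x = NL (\<lambda>i. e i * (e i * x i))" by simp
    also have "\<dots> \<le> NL (\<lambda>i. e i * x i)" using h[OF ex, of e 1] ae by simp
    finally show "NL (\<lambda>i. e i * x i) = NL x" using le1 by simp
  qed
  show ?thesis
  proof (intro exI conjI ballI)
    show "is_norm_c00 NL" by (rule norm)
    show "one_unconditional NL" by (rule unc)
    fix x assume x: "x \<in> c00"
    show "summable (\<lambda>k. (k_norm NL (n k) x)\<^sup>2)" using sq_summable[OF g x] by simp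
    show "NL x = max (c0_norm x) (sqrt (\<Sum>k. (k_norm NL (n k) x)\<^sup>2))"
      using NL_fix[OF x] by (simp add: Phi_def)
  qed
qed


end
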